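(* If $\mathcal C$ denotes the epireflective subcategory of $\mathbf{Top}$ defined by any one of the separation axioms $T_0$, $T_1$, $T_2$, functionally Hausdorff, then $\mathrm{r}_{\mathcal C}$ preserves arbitrary products of semitopological Mal'tsev spaces: for every family $\{X_i\}$ of semitopological Mal'tsev spaces, the canonical map $\mu_{\mathcal C}\colon\mathrm{r}_{\mathcal C}\prod X_i\to\prod\mathrm{r}_{\mathcal C}X_i$ is a homeomorphism.
   Context: For an epireflective subcategory $\mathcal C$ of $\mathbf{Top}$, $\mathrm{r}_{\mathcal C}X$ is the reflection of $X$ in $\mathcal C$ with universal continuous surjection $\mathrm{r}_{(X,\mathcal C)}$, and $\mu_{\mathcal C}$ is the unique continuous map with $\pi_j\circ\mu_{\mathcal C}=\mathrm{r}_{\mathcal C}(\pi_{X_j})$ for all $j$. A Mal'tsev operation on $X$ is a map $\Phi\colon X^3\to X$ with $\Phi(x,x,y)=\Phi(y,x,x)=y$; a semitopological Mal'tsev space is a space admitting a separately continuous Mal'tsev operation. A space is functionally Hausdorff if distinct points are separated by a real-valued continuous function. *)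

theory Defs
  imports "HOL-Analysis.Analysis"
begin

definition functionally_Hausdorff :: "'a topology \<Rightarrow> bool" where
  "functionally_Hausdorff X \<longleftrightarrow>
     (\<forall>x\<in>topspace X. \<forall>y\<in>topspace X. x \<noteq> y \<longrightarrow>
        (\<exists>f. continuous_map X euclideanreal f \<and> f x \<noteq> f y))"

datatype sep_axiom = ST0 | ST1 | ST2 | SFH

fun sep_holds :: "sep_axiom \<Rightarrow> 'a topology \<Rightarrow> bool" where
  "sep_holds ST0 X = t0_space X"
| "sep_holds ST1 X = t1_space X"
| "sep_holds ST2 X = Hausdorff_space X"
| "sep_holds SFH X = functionally_Hausdorff X"

definition semitopological_maltsev :: "'a topology \<Rightarrow> bool" where
  "semitopological_maltsev X \<longleftrightarrow>
     (\<exists>\<Phi> :: 'a \<Rightarrow> 'a \<Rightarrow> 'a \<Rightarrow> 'a.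
        (\<forall>x\<in>topspace X. \<forall>y\<in>topspace X. \<Phi> x x y = y \<and> \<Phi> y x x = y) \<and>
        (\<forall>b\<in>topspace X. \<forall>c\<in>topspace X. continuous_map X X (\<lambda>a. \<Phi> a b c)) \<and>
        (\<forall>a\<in>topspace X. \<forall>c\<in>topspace X. continuous_map X X (\<lambda>b. \<Phi> a b c)) \<and>
        (\<forall>a\<in>topspace X. \<forall>b\<in>topspace X. continuous_map X X (\<lambda>c. \<Phi> a b c)))"

text \<open>Test spaces range over
  topologies on the point type of X; this loses no generality since any continuous
  f: X \<rightarrow> Y factors through the subspace f(X) of Y (which satisfies s, the class being
  hereditary) and |f(X)| \<le> |X|.\<close>
definition is_reflection :: "sep_axiom \<Rightarrow> 'a topology \<Rightarrow> 'c topology \<Rightarrow> ('a \<Rightarrow> 'c) \<Rightarrow> bool" where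
  "is_reflection s X R r \<longleftrightarrow>
     sep_holds s R \<and> continuous_map X R r \<and> r ` topspace X = topspace R \<and>
     (\<forall>(Y :: 'a topology) f. sep_holds s Y \<and> continuous_map X Y f \<longrightarrow>
        (\<exists>g. continuous_map R Y g \<and> (\<forall>x\<in>topspace X. g (r x) = f x) \<and>
             (\<forall>g'. continuous_map R Y g' \<and> (\<forall>x\<in>topspace X. g' (r x) = f x) \<longrightarrow>
                   (\<forall>y\<in>topspace R. g' y = g y))))"

end

theory Submission
  imports Defs
begin

lemma sep_inj:
  assumes c: "continuous_map T Y f" and inj: "inj_on f (topspace T)" and s: "sep_holds s Y"
  shows "sep_holds s T"
proof -
  have pre: "openin T {x \<in> topspace T. f x \<in> U}" if "openin Y U" for U
    using c that by (rule openin_continuous_map_preimage)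
  have ne: "f x \<noteq> f y" if "x \<in> topspace T" "y \<in> topspace T" "x \<noteq> y" for x y
    using inj that by (meson inj_onD)
  have ft: "f x \<in> topspace Y" if "x \<in> topspace T" for x
    using c that by (simp add: continuous_map_def Pi_iff)
  show ?thesis
  proof (cases s)
    case ST0
    show ?thesis unfolding ST0 sep_holds.simps t0_space_def
    proof (intro ballI impI)
      fix x y assume xy: "x \<in> topspace T" "y \<in> topspace T" "x \<noteq> y"
      then obtain U where "openin Y U" "f x \<notin> U \<longleftrightarrow> f y \<in> U"
        using s[unfolded ST0 sep_holds.simps] ft[OF xy(1)] ft[OF xy(2)] ne[OF xy] unfolding t0_space_def by blast
      then show "\<exists>U. openin T U \<and> (x \<notin> U \<longleftrightarrow> y \<in> U)"
        using pre xy by (intro exI[of _ "{x \<in> topspace T. f x \<in> U}"]) auto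
    qed
  next
    case ST1
    show ?thesis unfolding ST1 sep_holds.simps t1_space_def
    proof (intro ballI impI)
      fix x y assume xy: "x \<in> topspace T" "y \<in> topspace T" "x \<noteq> y"
      then obtain U where "openin Y U" "f x \<in> U" "f y \<notin> U"
        using s[unfolded ST1 sep_holds.simps] ft[OF xy(1)] ft[OF xy(2)] ne[OF xy] unfolding t1_space_def by blast
      then show "\<exists>U. openin T U \<and> x \<in> U \<and> y \<notin> U"
        using pre xy by (intro exI[of _ "{x \<in> topspace T. f x \<in> U}"]) auto
    qed
  next
    case ST2
    show ?thesis unfolding ST2 sep_holds.simps Hausdorff_space_def
    proof (intro allI impI)
      fix x y assume "x \<in> topspace T \<and> y \<in> topspace T \<and> x \<noteq> y"
      then have xy: "x \<in> topspace T" "y \<in> topspace T" "x \<noteq> y" by auto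
      then obtain U V where "openin Y U" "openin Y V" "f x \<in> U" "f y \<in> V" "disjnt U V"
        using s[unfolded ST2 sep_holds.simps] ft[OF xy(1)] ft[OF xy(2)] ne[OF xy] unfolding Hausdorff_space_def by blast
      then show "\<exists>U V. openin T U \<and> openin T V \<and> x \<in> U \<and> y \<in> V \<and> disjnt U V"
        using pre xy by (intro exI[of _ "{x \<in> topspace T. f x \<in> U}"] exI[of _ "{x \<in> topspace T. f x \<in> V}"])
           (auto simp: disjnt_def)
    qed
  next
    case SFH
    show ?thesis unfolding SFH sep_holds.simps functionally_Hausdorff_def
    proof (intro ballI impI)
      fix x y assume xy: "x \<in> topspace T" "y \<in> topspace T" "x \<noteq> y"
      then obtain h where "continuous_map Y euclideanreal h" "h (f x) \<noteq> h (f y)"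
        using s[unfolded SFH sep_holds.simps] ft[OF xy(1)] ft[OF xy(2)] ne[OF xy] unfolding functionally_Hausdorff_def by blast
      then show "\<exists>h. continuous_map T euclideanreal h \<and> h x \<noteq> h y"
        using c by (intro exI[of _ "h \<circ> f"]) (auto intro: continuous_map_compose)
    qed
  qed
qed

lemma sep_t0: "sep_holds s Y \<Longrightarrow> t0_space Y"
proof (cases s)
  case SFH
  assume "sep_holds s Y"
  then have "t1_space Y" unfolding SFH sep_holds.simps functionally_Hausdorff_def t1_space_def
  proof (intro ballI impI)
    fix x y assume H: "\<forall>x\<in>topspace Y. \<forall>y\<in>topspace Y. x \<noteq> y \<longrightarrow>
        (\<exists>f. continuous_map Y euclideanreal f \<and> f x \<noteq> f y)" and xy: "x \<in> topspace Y" "y \<in> topspace Y" "x \<noteq> y"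
    then obtain f where f: "continuous_map Y euclideanreal f" "f x \<noteq> f y" by blast
    have "openin euclideanreal (- {f y})" by (simp add: open_Compl)
    then have "openin Y {z \<in> topspace Y. f z \<in> - {f y}}"
      using f(1) by (rule openin_continuous_map_preimage[rotated])
    then show "\<exists>U. openin Y U \<and> x \<in> U \<and> y \<notin> U" using xy f(2) by (intro exI) auto
  qed
  then show ?thesis by (simp add: t1_imp_t0_space)
qed (auto simp: t1_imp_t0_space Hausdorff_imp_t1_space)

lemma refl_factor:
  fixes X :: "'a topology" and R :: "'c topology" and Y :: "'d topology"
  assumes R: "is_reflection s X R r" and Ys: "sep_holds s Y" and f: "continuous_map X Y f"
  shows "\<exists>g. continuous_map R Y g \<and> (\<forall>x\<in>topspace X. g (r x) = f x)"
proof -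
  define \<sigma> where "\<sigma> = (\<lambda>y. SOME x. x \<in> topspace X \<and> f x = y)"
  define A where "A = \<sigma> ` (f ` topspace X)"
  have \<sigma>: "\<sigma> (f x) \<in> topspace X \<and> f (\<sigma> (f x)) = f x" if "x \<in> topspace X" for x
    unfolding \<sigma>_def by (rule someI[of _ x]) (use that in auto)
  have fY: "f x \<in> topspace Y" if "x \<in> topspace X" for x
    using f that by (simp add: continuous_map_def Pi_iff)
  define T where "T = pullback_topology A f Y"
  have A: "a \<in> A \<longleftrightarrow> (\<exists>x\<in>topspace X. a = \<sigma> (f x))" for a
    unfolding A_def by blast
  have "A \<subseteq> f -` topspace Y"
  proof
    fix a assume "a \<in> A"
    then obtain x where "x \<in> topspace X" "a = \<sigma> (f x)" using A by blast
    then show "a \<in> f -` topspace Y" using \<sigma>[of x] fY[of x] by simp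
  qed
  then have topT: "topspace T = A"
    unfolding T_def topspace_pullback_topology by blast
  have cT: "continuous_map T Y f"
    using continuous_map_pullback[OF continuous_map_id, of A f] unfolding T_def by simp
  have inj: "inj_on f (topspace T)"
    unfolding topT inj_on_def
  proof (intro ballI impI)
    fix a b assume "a \<in> A" "b \<in> A" "f a = f b"
    then obtain x y where "x \<in> topspace X" "a = \<sigma> (f x)" "y \<in> topspace X" "b = \<sigma> (f y)" using A by blast
    then show "a = b" using \<sigma>[of x] \<sigma>[of y] \<open>f a = f b\<close> by simp
  qed
  have sT: "sep_holds s T" by (rule sep_inj[OF cT inj Ys])
  have "continuous_map X Y (f \<circ> (\<sigma> \<circ> f))"
    using f by (rule continuous_map_eq) (use \<sigma> in auto)
  then have cX: "continuous_map X T (\<sigma> \<circ> f)"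
    unfolding T_def
  proof (rule continuous_map_pullback')
    show "topspace X \<subseteq> (\<sigma> \<circ> f) -` A"
    proof
      fix x assume "x \<in> topspace X"
      then show "x \<in> (\<sigma> \<circ> f) -` A" unfolding A_def by simp
    qed
  qed
  obtain g where g: "continuous_map R T g" "\<forall>x\<in>topspace X. g (r x) = (\<sigma> \<circ> f) x"
  proof -
    have "\<forall>(Y::'a topology) f. sep_holds s Y \<and> continuous_map X Y f \<longrightarrow>
        (\<exists>g. continuous_map R Y g \<and> (\<forall>x\<in>topspace X. g (r x) = f x) \<and>
             (\<forall>g'. continuous_map R Y g' \<and> (\<forall>x\<in>topspace X. g' (r x) = f x) \<longrightarrow>
                   (\<forall>y\<in>topspace R. g' y = g y)))"
      using R unfolding is_reflection_def by (elim conjE)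
    then have "\<exists>g. continuous_map R T g \<and> (\<forall>x\<in>topspace X. g (r x) = (\<sigma> \<circ> f) x)"
      using sT cX by (metis (no_types, lifting))
    then show ?thesis using that by blast
  qed
  show ?thesis
  proof (intro exI[of _ "f \<circ> g"] conjI ballI)
    show "continuous_map R Y (f \<circ> g)" using continuous_map_compose[OF g(1) cT] .
    fix x assume "x \<in> topspace X"
    then show "(f \<circ> g) (r x) = f x" using g(2) \<sigma> by simp
  qed
qed

lemma sep_product:
  assumes "\<forall>i\<in>I. sep_holds s (Rs i)"
  shows "sep_holds s (product_topology Rs I)"
proof (cases s)
  case ST0 then show ?thesis using assms by (simp add: t0_space_product_topology)
next
  case ST1 then show ?thesis using assms by (simp add: t1_space_product_topology)
next
  case ST2 then show ?thesis using assms by (simp add: Hausdorff_space_product_topology)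
next
  case SFH
  show ?thesis unfolding SFH sep_holds.simps functionally_Hausdorff_def
  proof (intro ballI impI)
    fix x y assume x: "x \<in> topspace (product_topology Rs I)" and y: "y \<in> topspace (product_topology Rs I)"
      and xy: "x \<noteq> y"
    then obtain j where j: "j \<in> I" "x j \<noteq> y j"
      by (auto simp: PiE_iff extensional_def fun_eq_iff) (metis)
    have "x j \<in> topspace (Rs j)" "y j \<in> topspace (Rs j)" using x y j by (auto simp: PiE_iff)
    moreover have "functionally_Hausdorff (Rs j)" using assms j SFH by auto
    ultimately obtain h where h: "continuous_map (Rs j) euclideanreal h" "h (x j) \<noteq> h (y j)"
      using j unfolding functionally_Hausdorff_def by blast
    have "continuous_map (product_topology Rs I) euclideanreal (h \<circ> (\<lambda>z. z j))"
      by (rule continuous_map_compose[OF continuous_map_product_projection[OF j(1), of Rs] h(1)])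
    then show "\<exists>h. continuous_map (product_topology Rs I) euclideanreal h \<and> h x \<noteq> h y"
      using h(2) by (intro exI[of _ "h \<circ> (\<lambda>z. z j)"]) simp
  qed
qed

lemma refl_open:
  fixes X :: "'a topology" and R :: "'c topology"
  assumes M: "semitopological_maltsev X" and R: "is_reflection s X R r" and U: "openin X U"
  shows "openin R (r ` U)"
proof -
  from M obtain \<Phi> :: "'a \<Rightarrow> 'a \<Rightarrow> 'a \<Rightarrow> 'a" where
    P1: "\<forall>x\<in>topspace X. \<forall>y\<in>topspace X. \<Phi> x x y = y \<and> \<Phi> y x x = y" and
    P2: "\<forall>b\<in>topspace X. \<forall>c\<in>topspace X. continuous_map X X (\<lambda>a. \<Phi> a b c)" and
    P3: "\<forall>a\<in>topspace X. \<forall>b\<in>topspace X. continuous_map X X (\<lambda>c. \<Phi> a b c)"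
    unfolding semitopological_maltsev_def by blast
  have sR: "sep_holds s R" and cr: "continuous_map X R r" and sr: "r ` topspace X = topspace R"
    using R unfolding is_reflection_def by blast+
  have ker: "r (h a) = r (h b)" if h: "continuous_map X X h" and ab: "a \<in> topspace X" "b \<in> topspace X" "r a = r b" for h a b
  proof -
    obtain k where k: "continuous_map R R k" "\<forall>x\<in>topspace X. k (r x) = (r \<circ> h) x"
      using refl_factor[OF R sR continuous_map_compose[OF h cr]] by blast
    show ?thesis using k(2) ab by (metis comp_apply)
  qed
  have Ut: "U \<subseteq> topspace X" using U by (rule openin_subset)
  define S where "S = {w \<in> topspace X. \<exists>u\<in>U. r w = r u}"
  have Sopen: "openin X S"
    unfolding openin_subopen[of X S]
  proof
    fix w assume "w \<in> S"
    then obtain u where w: "w \<in> topspace X" and u: "u \<in> U" "r w = r u" unfolding S_def by blast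
    have ut: "u \<in> topspace X" using u Ut by blast
    define N where "N = {c \<in> topspace X. \<Phi> c w u \<in> U}"
    have "openin X N" unfolding N_def
      using openin_continuous_map_preimage[OF P2[rule_format, OF w ut] U] .
    moreover have "w \<in> N" unfolding N_def using P1 w ut u by simp
    moreover have "N \<subseteq> S"
    proof
      fix c assume "c \<in> N"
      then have c: "c \<in> topspace X" "\<Phi> c w u \<in> U" unfolding N_def by auto
      have "r (\<Phi> c w w) = r (\<Phi> c w u)"
        using ker[OF P3[rule_format, OF c(1) w] w ut u(2)] .
      then have "r c = r (\<Phi> c w u)" using P1 c(1) w by simp
      then show "c \<in> S" unfolding S_def using c by blast
    qed
    ultimately show "\<exists>T. openin X T \<and> w \<in> T \<and> T \<subseteq> S" by blast
  qed
  define W where "W = r ` U"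
  have WR: "W \<subseteq> topspace R" unfolding W_def using Ut sr by blast
  define T where "T = topology_generated_by (insert W {V. openin R V})"
  have topT: "topspace T = topspace R"
    unfolding T_def topology_generated_by_topspace using WR by (auto simp: topspace_def)
  have cid: "continuous_map T R id"
    unfolding continuous_map_def
  proof (intro conjI allI impI)
    show "id \<in> topspace T \<rightarrow> topspace R" using topT by auto
    fix V assume V: "openin R V"
    have "{x \<in> topspace T. id x \<in> V} = V" using openin_subset[OF V] topT by auto
    then show "openin T {x \<in> topspace T. id x \<in> V}"
      unfolding T_def using V by (simp add: topology_generated_by_Basis)
  qed
  have sT: "sep_holds s T" by (rule sep_inj[OF cid _ sR]) simp
  have crT: "continuous_map X T r"
    unfolding T_def
  proof (rule continuous_on_generated_topo)
    fix V assume "V \<in> insert W {V. openin R V}"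
    then consider "V = W" | "openin R V" by blast
    then show "openin X (r -` V \<inter> topspace X)"
    proof cases
      case 1
      have "r -` V \<inter> topspace X = S" unfolding 1 W_def S_def using Ut by auto
      then show ?thesis using Sopen by simp
    next
      case 2
      have "r -` V \<inter> topspace X = {x \<in> topspace X. r x \<in> V}" by auto
      then show ?thesis using openin_continuous_map_preimage[OF cr 2] by simp
    qed
  next
    show "r ` topspace X \<subseteq> \<Union> (insert W {V. openin R V})"
      using sr by (auto simp: topspace_def)
  qed
  obtain g where g: "continuous_map R T g" "\<forall>x\<in>topspace X. g (r x) = r x"
    using refl_factor[OF R sT crT] by blast
  have gid: "g y = y" if "y \<in> topspace R" for y
    using that sr g(2) by force
  have "openin T W" unfolding T_def by (simp add: topology_generated_by_Basis)
  then have "openin R {y \<in> topspace R. g y \<in> W}"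
    by (rule openin_continuous_map_preimage[OF g(1)])
  moreover have "{y \<in> topspace R. g y \<in> W} = W" using gid WR by auto
  ultimately show ?thesis unfolding W_def by simp
qed

lemma prod_closure:
  fixes Xs :: "'i \<Rightarrow> 'a topology" and R :: "'b topology" and Rs :: "'i \<Rightarrow> 'c topology"
  assumes R: "is_reflection s (product_topology Xs I) R r"
    and Ri: "\<forall>i\<in>I. is_reflection s (Xs i) (Rs i) (rs i)"
    and x: "x \<in> topspace (product_topology Xs I)" and y: "y \<in> topspace (product_topology Xs I)"
    and eq: "\<forall>j\<in>I. rs j (x j) = rs j (y j)"
  shows "r y \<in> R closure_of {r x}"
proof -
  let ?P = "product_topology Xs I"
  have sR: "sep_holds s R" and cr: "continuous_map ?P R r" and sr: "r ` topspace ?P = topspace R"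
    using R unfolding is_reflection_def by blast+
  have stepA: "r (z(j := x j)) = r (z(j := y j))" if z: "z \<in> topspace ?P" and j: "j \<in> I" for z j
  proof -
    have cs: "continuous_map (Xs j) ?P (\<lambda>a. z(j := a))"
      unfolding continuous_map_componentwise
    proof (intro conjI ballI)
      show "(\<lambda>a. z(j := a)) ` topspace (Xs j) \<subseteq> extensional I"
        using z j by (auto simp: PiE_iff extensional_def)
      fix k assume k: "k \<in> I"
      show "continuous_map (Xs j) (Xs k) (\<lambda>a. (z(j := a)) k)"
      proof (cases "k = j")
        case True then show ?thesis by simp
      next
        case False
        have "z k \<in> topspace (Xs k)" using z k by (auto simp: PiE_iff)
        then show ?thesis using False by simp
      qed
    qed
    have sj: "sep_holds s R" by (rule sR)
    obtain k where k: "continuous_map (Rs j) R k" "\<forall>a\<in>topspace (Xs j). k (rs j a) = (r \<circ> (\<lambda>a. z(j := a))) a"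
      using refl_factor[OF Ri[rule_format, OF j] sR continuous_map_compose[OF cs cr]] by blast
    have "x j \<in> topspace (Xs j)" "y j \<in> topspace (Xs j)" using x y j by (auto simp: PiE_iff)
    then show ?thesis using k(2) eq j by (metis comp_apply)
  qed
  define zF where "zF = (\<lambda>F k. if k \<in> F then y k else x k)"
  have ztop: "zF F \<in> topspace ?P" for F
    using x y unfolding zF_def by (auto simp: PiE_iff extensional_def)
  have stepB: "finite F \<Longrightarrow> F \<subseteq> I \<Longrightarrow> r (zF F) = r x" for F
  proof (induction F rule: finite_induct)
    case empty then show ?case by (simp add: zF_def)
  next
    case (insert j F)
    have j: "j \<in> I" using insert by auto
    have e1: "zF (insert j F) = (zF F)(j := y j)" by (auto simp: zF_def fun_eq_iff)
    have e2: "zF F = (zF F)(j := x j)" using insert(2) by (auto simp: zF_def fun_eq_iff)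
    have "r (zF (insert j F)) = r (zF F)"
      using stepA[OF ztop j] e1 e2 by metis
    then show ?case using insert by simp
  qed
  define C where "C = {w \<in> topspace ?P. r w \<in> R closure_of {r x}}"
  have Cc: "closedin ?P C" unfolding C_def
    by (rule closedin_continuous_map_preimage[OF cr closedin_closure_of])
  have rxt: "r x \<in> topspace R" using x sr by blast
  show ?thesis
  proof (rule ccontr)
    assume "r y \<notin> R closure_of {r x}"
    then have "y \<in> topspace ?P - C" using y unfolding C_def by blast
    moreover have "openin ?P (topspace ?P - C)" using Cc by blast
    ultimately obtain U where U: "finite {i \<in> I. U i \<noteq> topspace (Xs i)}" "\<forall>i\<in>I. openin (Xs i) (U i)"
        "y \<in> Pi\<^sub>E I U" "Pi\<^sub>E I U \<subseteq> topspace ?P - C"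
      unfolding openin_product_topology_alt by blast
    define F where "F = {i \<in> I. U i \<noteq> topspace (Xs i)}"
    have "zF F \<in> Pi\<^sub>E I U"
      using U(3) x unfolding zF_def F_def by (auto simp: PiE_iff extensional_def)
    moreover have "zF F \<in> C"
    proof -
      have "r (zF F) = r x" using stepB[of F] U(1) unfolding F_def by auto
      then show ?thesis unfolding C_def using ztop rxt closure_of_subset[of "{r x}" R] by auto
    qed
    ultimately show False using U(4) by blast
  qed
qed

lemma prod_kernel:
  fixes Xs :: "'i \<Rightarrow> 'a topology" and R :: "'b topology" and Rs :: "'i \<Rightarrow> 'c topology"
  assumes R: "is_reflection s (product_topology Xs I) R r"
    and Ri: "\<forall>i\<in>I. is_reflection s (Xs i) (Rs i) (rs i)"
    and x: "x \<in> topspace (product_topology Xs I)" and y: "y \<in> topspace (product_topology Xs I)"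
    and eq: "\<forall>j\<in>I. rs j (x j) = rs j (y j)"
  shows "r x = r y"
proof -
  let ?P = "product_topology Xs I"
  have sR: "sep_holds s R" and cr: "continuous_map ?P R r" and sr: "r ` topspace ?P = topspace R"
    using R unfolding is_reflection_def by blast+
  have a: "r y \<in> R closure_of {r x}" by (rule prod_closure[OF R Ri x y eq])
  have b: "r x \<in> R closure_of {r y}" by (rule prod_closure[OF R Ri y x]) (use eq in auto)
  have xt: "r x \<in> topspace R" and yt: "r y \<in> topspace R" using x y sr by blast+
  have "R closure_of {r y} \<subseteq> R closure_of {r x}"
    using a by (intro closure_of_minimal) auto
  moreover have "R closure_of {r x} \<subseteq> R closure_of {r y}"
    using b by (intro closure_of_minimal) auto
  ultimately have "R closure_of {r x} = R closure_of {r y}" by blast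
  then show ?thesis using sep_t0[OF sR] xt yt unfolding t0_space_closure_of_sing by blast
qed

lemma pick:
  assumes "q \<in> Pi\<^sub>E I (\<lambda>i. f i ` W i)"
  shows "\<exists>x\<in>Pi\<^sub>E I W. (\<lambda>j\<in>I. f j (x j)) = q"
proof -
  define x where "x = (\<lambda>i\<in>I. SOME a. a \<in> W i \<and> f i a = q i)"
  have "x i \<in> W i \<and> f i (x i) = q i" if "i \<in> I" for i
  proof -
    have "\<exists>a. a \<in> W i \<and> f i a = q i" using assms that by (auto simp: PiE_iff) (metis imageE)
    then show ?thesis unfolding x_def using that by (simp add: someI_ex[of "\<lambda>a. a \<in> W i \<and> f i a = q i"])
  qed
  moreover have "q \<in> extensional I" using assms by (simp add: PiE_iff)
  ultimately show ?thesis
    by (intro bexI[of _ x]) (auto simp: PiE_iff x_def fun_eq_iff extensional_def)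
qed

theorem corollary4p10:
  fixes s :: sep_axiom
    and Xs :: "'i \<Rightarrow> 'a topology" and I :: "'i set"
    and R :: "'b topology" and r :: "('i \<Rightarrow> 'a) \<Rightarrow> 'b"
    and Rs :: "'i \<Rightarrow> 'c topology" and rs :: "'i \<Rightarrow> 'a \<Rightarrow> 'c"
  assumes "\<forall>i\<in>I. semitopological_maltsev (Xs i)"
    and "is_reflection s (product_topology Xs I) R r"
    and "\<forall>i\<in>I. is_reflection s (Xs i) (Rs i) (rs i)"
  shows "\<exists>\<mu>. continuous_map R (product_topology Rs I) \<mu> \<and>
             (\<forall>x\<in>topspace (product_topology Xs I). \<mu> (r x) = (\<lambda>j\<in>I. rs j (x j))) \<and>
             homeomorphic_map R (product_topology Rs I) \<mu>"
proof -
  note M = assms(1) and R = assms(2) and Ri = assms(3)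
  let ?P = "product_topology Xs I" and ?Q = "product_topology Rs I"
  define p where "p = (\<lambda>x. \<lambda>j\<in>I. rs j (x j))"
  have sR: "sep_holds s R" and cr: "continuous_map ?P R r" and sr: "r ` topspace ?P = topspace R"
    using R unfolding is_reflection_def by blast+
  have sRi: "sep_holds s (Rs i)" and cri: "continuous_map (Xs i) (Rs i) (rs i)"
    and sri: "rs i ` topspace (Xs i) = topspace (Rs i)" if "i \<in> I" for i
    using Ri that unfolding is_reflection_def by blast+
  have sQ: "sep_holds s ?Q" using sRi by (intro sep_product) blast
  have cp: "continuous_map ?P ?Q p"
    unfolding continuous_map_componentwise
  proof (intro conjI ballI)
    show "p ` topspace ?P \<subseteq> extensional I" unfolding p_def by auto
    fix k assume k: "k \<in> I"
    have "continuous_map ?P (Rs k) (rs k \<circ> (\<lambda>x. x k))"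
      by (rule continuous_map_compose[OF continuous_map_product_projection[OF k, of Xs] cri[OF k]])
    then show "continuous_map ?P (Rs k) (\<lambda>x. p x k)"
      by (rule continuous_map_eq) (simp add: p_def k)
  qed
  obtain \<mu> where mu: "continuous_map R ?Q \<mu>" "\<forall>x\<in>topspace ?P. \<mu> (r x) = p x"
    using refl_factor[OF R sQ cp] by blast
  have surj: "\<mu> ` topspace R = topspace ?Q"
  proof
    show "\<mu> ` topspace R \<subseteq> topspace ?Q" using mu(1) continuous_map_image_subset_topspace by blast
    show "topspace ?Q \<subseteq> \<mu> ` topspace R"
    proof
      fix q assume q: "q \<in> topspace ?Q"
      have "q \<in> Pi\<^sub>E I (\<lambda>i. rs i ` topspace (Xs i))" using q sri by (auto simp: PiE_iff)
      then obtain x where x: "x \<in> Pi\<^sub>E I (\<lambda>i. topspace (Xs i))" "p x = q"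
        using pick[of q I rs "\<lambda>i. topspace (Xs i)"] unfolding p_def by blast
      then have "x \<in> topspace ?P" by simp
      then show "q \<in> \<mu> ` topspace R" using mu(2) x(2) sr by (metis image_eqI)
    qed
  qed
  have inj: "inj_on \<mu> (topspace R)"
  proof (rule inj_onI)
    fix a b assume a: "a \<in> topspace R" and b: "b \<in> topspace R" and ab: "\<mu> a = \<mu> b"
    obtain x where x: "x \<in> topspace ?P" "a = r x" using a sr by blast
    obtain y where y: "y \<in> topspace ?P" "b = r y" using b sr by blast
    have "p x = p y" using ab mu(2) x y by simp
    then have "\<forall>j\<in>I. rs j (x j) = rs j (y j)" unfolding p_def by (metis restrict_apply')
    then show "a = b" using prod_kernel[OF R Ri x(1) y(1)] x y by simp
  qed
  have om: "open_map R ?Q \<mu>"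
    unfolding open_map_def
  proof (intro allI impI)
    fix V assume V: "openin R V"
    define UU where "UU = {x \<in> topspace ?P. r x \<in> V}"
    have UUo: "openin ?P UU" unfolding UU_def by (rule openin_continuous_map_preimage[OF cr V])
    have img: "\<mu> ` V = p ` UU"
    proof
      show "\<mu> ` V \<subseteq> p ` UU"
      proof
        fix q assume "q \<in> \<mu> ` V"
        then obtain a where a: "a \<in> V" "q = \<mu> a" by blast
        then obtain x where "x \<in> topspace ?P" "a = r x" using openin_subset[OF V] sr by blast
        then show "q \<in> p ` UU" using a mu(2) unfolding UU_def by auto
      qed
      show "p ` UU \<subseteq> \<mu> ` V" using mu(2) unfolding UU_def by force
    qed
    show "openin ?Q (\<mu> ` V)"
      unfolding img openin_product_topology_alt
    proof
      fix q assume "q \<in> p ` UU"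
      then obtain x where x: "x \<in> UU" "q = p x" by blast
      then obtain W where W: "finite {i \<in> I. W i \<noteq> topspace (Xs i)}" "\<forall>i\<in>I. openin (Xs i) (W i)"
        "x \<in> Pi\<^sub>E I W" "Pi\<^sub>E I W \<subseteq> UU"
        using UUo unfolding openin_product_topology_alt by blast
      show "\<exists>W'. finite {i \<in> I. W' i \<noteq> topspace (Rs i)} \<and> (\<forall>i\<in>I. openin (Rs i) (W' i)) \<and>
                 q \<in> Pi\<^sub>E I W' \<and> Pi\<^sub>E I W' \<subseteq> p ` UU"
      proof (intro exI[of _ "\<lambda>i. rs i ` W i"] conjI ballI)
        have "{i \<in> I. rs i ` W i \<noteq> topspace (Rs i)} \<subseteq> {i \<in> I. W i \<noteq> topspace (Xs i)}"
          using sri by auto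
        then show "finite {i \<in> I. rs i ` W i \<noteq> topspace (Rs i)}" using W(1) by (rule finite_subset)
        fix i assume i: "i \<in> I"
        show "openin (Rs i) (rs i ` W i)"
          by (rule refl_open[OF M[rule_format, OF i] Ri[rule_format, OF i] W(2)[rule_format, OF i]])
      next
        show "q \<in> Pi\<^sub>E I (\<lambda>i. rs i ` W i)" using x(2) W(3) unfolding p_def by (auto simp: PiE_iff)
        show "Pi\<^sub>E I (\<lambda>i. rs i ` W i) \<subseteq> p ` UU"
        proof
          fix q' assume "q' \<in> Pi\<^sub>E I (\<lambda>i. rs i ` W i)"
          then obtain w where "w \<in> Pi\<^sub>E I W" "p w = q'" using pick[of q' I rs W] unfolding p_def by blast
          then show "q' \<in> p ` UU" using W(4) by blast
        qed
      qed
    qed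
  qed
  show ?thesis
    using bijective_open_imp_homeomorphic_map[OF mu(1) om surj inj] mu unfolding p_def by blast
qed

end
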